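(* Let $P_1,P_2,P_3$ be the vertices of an equilateral triangle in $\mathbb{C}$, and let $$F_1(z)=\tfrac{z+P_1}{2},\qquad F_2(z)=\tfrac{z+P_2}{2},\qquad F_3(z)=\tfrac{3P_3-z}{2}.$$ Put $Q_1=F_3(P_1)=\tfrac{3P_3-P_1}{2}$, $Q_2=F_3(P_2)=\tfrac{3P_3-P_2}{2}$ and $V_0=\{P_1,P_2,P_3,Q_1,Q_2\}$. Let $$k=\frac{3+\sqrt{41}}{16},\qquad R_2=1,\qquad R_1=\frac{\sqrt{41}-1}{4}.$$ Define the level-1 network $G_1$ on vertex set $V_0$ with the following six edges and resistances: $P_1P_2$ has resistance $R_1$; $P_1P_3$ and $P_2P_3$ have resistance $R_2$; $Q_1Q_2$ has resistance $kR_1$; $Q_1P_3$ and $Q_2P_3$ have resistance $kR_2$. Define the level-2 network $G_2$ on vertex set $V_1=F_1(V_0)\cup F_2(V_0)\cup F_3(V_0)\subset\mathbb{C}$ (points are identified when they coincide as points of $\mathbb{C}$) whose edges are, for each $i\in\{1,2,3\}$ and each edge $pq$ of $G_1$ with resistance $r$, an edge $F_i(p)F_i(q)$ with the same resistance $r$ (parallel edges, if any, combine by adding conductances). Then for all $p,q\in V_0$, $$R^{G_1}_{\mathrm{eff}}(p,q)=k\,R^{G_2}_{\mathrm{eff}}(p,q).$$ Equivalently, the trace (Schur complement onto $V_0$) of the conductance Laplacian of $G_2$ equals $k$ times the conductance Laplacian of $G_1$.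
   Context: A resistance network is a finite vertex set with edges carrying positive resistances $r$ (conductance $c=1/r$); its energy is $\mathscr{E}(u)=\sum_{\text{edges }pq} c_{pq}(u(p)-u(q))^2$ for $u$ a real function on the vertices. For vertices $p\neq q$ of a connected network, the effective resistance is defined by $1/R_{\mathrm{eff}}(p,q)=\inf\{\mathscr{E}(u): u(p)=1,\ u(q)=0\}$, and $R_{\mathrm{eff}}(p,p)=0$. The trace of the network onto a subset $V$ of vertices is the quadratic form $u\mapsto\inf\{\mathscr{E}(g): g|_{V}=u\}$ on functions on $V$. The fractalina is the attractor of the iterated function system $\{F_1,F_2,F_3\}$. *)

theory Defs
  imports "HOL-Analysis.Analysis"
begin

text \<open>A resistance network: a finite vertex set together with a list of edges
  (p, q, r) with resistance r > 0.  Parallel edges are allowed; their conductances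
  add up automatically in the energy.\<close>

type_synonym network = "complex set \<times> (complex \<times> complex \<times> real) list"

definition energy :: "network \<Rightarrow> (complex \<Rightarrow> real) \<Rightarrow> real" where
  "energy G u = (\<Sum>(p, q, r) \<leftarrow> snd G. (1 / r) * (u p - u q)\<^sup>2)"

definition reff :: "network \<Rightarrow> complex \<Rightarrow> complex \<Rightarrow> real" where
  "reff G p q = (if p = q then 0 else
     1 / Inf {energy G u | u. (\<forall>x. x \<notin> fst G \<longrightarrow> u x = 0) \<and> u p = 1 \<and> u q = 0})"

definition equilateral :: "complex \<Rightarrow> complex \<Rightarrow> complex \<Rightarrow> bool" where
  "equilateral P1 P2 P3 \<longleftrightarrow> P1 \<noteq> P2 \<and>
     dist P1 P2 = dist P2 P3 \<and> dist P2 P3 = dist P3 P1"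

definition kconst :: real where "kconst = (3 + sqrt 41) / 16"
definition Rtwo :: real where "Rtwo = 1"
definition Rone :: real where "Rone = (sqrt 41 - 1) / 4"

definition F1 :: "complex \<Rightarrow> complex \<Rightarrow> complex" where "F1 P1 z = (z + P1) / 2"
definition F2 :: "complex \<Rightarrow> complex \<Rightarrow> complex" where "F2 P2 z = (z + P2) / 2"
definition F3 :: "complex \<Rightarrow> complex \<Rightarrow> complex" where "F3 P3 z = (3 * P3 - z) / 2"

definition V0 :: "complex \<Rightarrow> complex \<Rightarrow> complex \<Rightarrow> complex set" where
  "V0 P1 P2 P3 = {P1, P2, P3, F3 P3 P1, F3 P3 P2}"

definition edges1 :: "complex \<Rightarrow> complex \<Rightarrow> complex \<Rightarrow> (complex \<times> complex \<times> real) list" where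
  "edges1 P1 P2 P3 =
    (let Q1 = F3 P3 P1; Q2 = F3 P3 P2 in
     [(P1, P2, Rone), (P1, P3, Rtwo), (P2, P3, Rtwo),
      (Q1, Q2, kconst * Rone), (Q1, P3, kconst * Rtwo), (Q2, P3, kconst * Rtwo)])"

definition G1 :: "complex \<Rightarrow> complex \<Rightarrow> complex \<Rightarrow> network" where
  "G1 P1 P2 P3 = (V0 P1 P2 P3, edges1 P1 P2 P3)"

definition G2 :: "complex \<Rightarrow> complex \<Rightarrow> complex \<Rightarrow> network" where
  "G2 P1 P2 P3 =
    (let Fs = [F1 P1, F2 P2, F3 P3] in
     (\<Union>F \<in> set Fs. F ` V0 P1 P2 P3,
      concat (map (\<lambda>F. map (\<lambda>(p, q, r). (F p, F q, r)) (edges1 P1 P2 P3)) Fs)))"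

end

theory Submission
  imports Defs
begin


definition Phi :: "real\<Rightarrow>real\<Rightarrow>real\<Rightarrow>real\<Rightarrow>real\<Rightarrow>real\<Rightarrow>real\<Rightarrow>real\<Rightarrow>real\<Rightarrow>real\<Rightarrow>real\<Rightarrow>real\<Rightarrow>real\<Rightarrow>real\<Rightarrow>real\<Rightarrow>real\<Rightarrow>real" where
"Phi c1 c2 c3 c4 a b c q1 q2 m12 m13 m23 xa xb xc xd =
  c1 * (a-m12)^2 + c2 * (a-m13)^2 + c2 * (m12-m13)^2 + c3 * (xa-xc)^2 + c4 * (xa-m13)^2 + c4 * (xc-m13)^2
 + c1 * (m12-b)^2 + c2 * (m12-m23)^2 + c2 * (b-m23)^2 + c3 * (xd-xb)^2 + c4 * (xd-m23)^2 + c4 * (xb-m23)^2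
 + c1 * (q1-q2)^2 + c2 * (q1-c)^2 + c2 * (q2-c)^2 + c3 * (xa-xb)^2 + c4 * (xa-c)^2 + c4 * (xb-c)^2"
definition E1f :: "real\<Rightarrow>real\<Rightarrow>real\<Rightarrow>real\<Rightarrow>real\<Rightarrow>real\<Rightarrow>real\<Rightarrow>real\<Rightarrow>real\<Rightarrow>real" where
"E1f c1 c2 c3 c4 a b c q1 q2 = c1 * (a-b)^2 + c2 * (a-c)^2 + c2 * (b-c)^2 + c3 * (q1-q2)^2 + c4 * (q1-c)^2 + c4 * (q2-c)^2"
definition "H12 (s::real) (a::real) (b::real)  c = (-280 + 120 * s) * (a+b) + (1840 - 240 * s) * (c::real)"
definition "H13 (s::real) (a::real) (b::real)  c = (352 + 32 * s) * a + (-112+48 * s) * b + (1040 - 80 * s) * (c::real)"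
definition "HA (s::real) (a::real) (b::real)  c = (255+5 * s) * a + (-5+25 * s) * b + (1030 - 30 * s) * (c::real)"
definition "HC (s::real) (a::real) (b::real)  c = (250+30 * s) * a + (-270+70 * s) * b + (1300-100 * s) * (c::real)"

lemma core: "16 * 1280^2 * Phi (s+1) 10 (19-s) (5 * s-15) a b c q1 q2 m12 m13 m23 xa xb xc xd =
  1280^2 * (3+s) * E1f (s+1) 10 (19-s) (5 * s-15) a b c q1 q2 +
  16 * Phi (s+1) 10 (19-s) (5 * s-15) 0 0 0 0 0 (1280 * m12 - H12 s a b c) (1280 * m13 - H13 s a b c) (1280 * m23 - H13 s b a c)
    (1280 * xa - HA s a b c) (1280 * xb - HA s b a c) (1280 * xc - HC s a b c) (1280 * xd - HC s b a c)
  + (s * s-41) * (((-6553600) * q2 * q2 + (-3276800) * q1 * q2 + (-6553600) * q1 * q1 + (-1228800) * c * xd + (-1228800) * c * xc + (1228800) * c * xb + (1228800) * c * xa + (-6144000) * c * m23 + (-6144000) * c * m13 + (-19660800) * c * m12 + (16384000) * c * q2 + (16384000) * c * q1 + (9142400) * c * c + (-1433600) * b * xd + (2662400) * b * xc + (-2662400) * b * xb + (1433600) * b * xa + (5939200) * b * m23 + (204800) * b * m13 + (9830400) * b * m12 + (-9552000) * b * c + (-3139680) * b * b + (2662400) * a * xd + (-1433600) * a * xc + (1433600) * a * xb + (-2662400) * a * xa + (204800) * a * m23 + (5939200) * a * m13 + (9830400) * a * m12 + (-9552000) * a * c + (-143040) * a * b + (-3139680) * a * a) + ((-2294400) * c *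 c + (2294400) * b * c + (-603680) * b * b + (2294400) * a * c + (-1087040) * a * b + (-603680) * a * a) * s)"
  unfolding Phi_def E1f_def H12_def H13_def HA_def HC_def
  by (simp only: power2_eq_square) algebra

lemma Phi_scale_c: "Phi (r * c1) (r * c2) (r * c3) (r * c4) a b c q1 q2 m12 m13 m23 xa xb xc xd
   = r  *  Phi c1 c2 c3 c4 a b c q1 q2 m12 m13 m23 xa xb xc xd"
  unfolding Phi_def by (simp only: power2_eq_square) algebra
lemma E1f_scale_c: "E1f (r * c1) (r * c2) (r * c3) (r * c4) a b c q1 q2 = r  *  E1f c1 c2 c3 c4 a b c q1 q2"
  unfolding E1f_def by (simp only: power2_eq_square) algebra
lemma Phi_scale_v: "Phi c1 c2 c3 c4 0 0 0 0 0 (r * m12) (r * m13) (r * m23) (r * xa) (r * xb) (r * xc) (r * xd)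
   = r^2  *  Phi c1 c2 c3 c4 0 0 0 0 0 m12 m13 m23 xa xb xc xd"
  unfolding Phi_def by (simp only: power2_eq_square) algebra

lemma Phi_nonneg: "c1 \<ge> 0 \<Longrightarrow> c2 \<ge> 0 \<Longrightarrow> c3 \<ge> 0 \<Longrightarrow> c4 \<ge> 0 \<Longrightarrow>
  Phi c1 c2 c3 c4 a b c q1 q2 m12 m13 m23 xa xb xc xd \<ge> 0"
  unfolding Phi_def by (intro add_nonneg_nonneg mult_nonneg_nonneg; simp)

definition "s41 = sqrt (41::real)"
lemma s41_sq: "s41  *  s41 = 41" unfolding s41_def by simp
lemma s41_bounds: "3 < s41" "s41 < 19"
  unfolding s41_def by (rule real_less_rsqrt, simp) (rule real_less_lsqrt, simp_all)

lemma inv_from: "x * c = (1::real) \<Longrightarrow> 1 / x = c"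
proof -
  assume h: "x * c = 1"
  then have "x \<noteq> 0" by auto
  then show ?thesis using h by (simp add: field_simps)
qed

lemma cond_vals:
  "1 / Rone = (s41 + 1) / 10" "1 / Rtwo = 1" "1 / (kconst * Rone) = (19 - s41) / 10"
  "1 / (kconst * Rtwo) = (5 * s41 - 15) / 10" "kconst = (3 + s41) / 16"
proof -
  have sq: "s41 * s41 = 41" by (rule s41_sq)
  have b: "3 < s41" "s41 < 19" by (rule s41_bounds)+
  have k: "kconst = (3 + s41) / 16" unfolding kconst_def s41_def by simp
  have r: "Rone = (s41 - 1) / 4" unfolding Rone_def s41_def by simp
  show "kconst = (3 + s41) / 16" by (rule k)
  show "1 / Rtwo = 1" unfolding Rtwo_def by simp
  have e1: "(s41 + 1) * (s41 - 1) = 40" using sq by (simp add: algebra_simps)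
  show "1 / Rone = (s41 + 1) / 10" unfolding r using b e1 by (simp add: field_simps)
  have e2: "(3 + s41) * (s41 - 1) * (19 - s41) = 640"
  proof -
    have "(3 + s41) * (s41 - 1) * (19 - s41) = -(s41 * s41) * s41 + 17 * (s41 * s41) + 41 * s41 - 57"
      by (simp add: algebra_simps)
    also have "... = 640" using sq by simp
    finally show ?thesis .
  qed
  have "(3 + s41) / 16 * ((s41 - 1) / 4) * ((19 - s41) / 10) = ((3 + s41) * (s41 - 1) * (19 - s41)) / 640"
    by simp
  also have "... = 1" using e2 by simp
  finally show "1 / (kconst * Rone) = (19 - s41) / 10" unfolding r k by (rule inv_from)
  have e3: "(3 + s41) * (5 * s41 - 15) = 160" using sq by (simp add: algebra_simps)
  show "1 / (kconst * Rtwo) = (5 * s41 - 15) / 10" unfolding k Rtwo_def using b e3 by (simp add: field_simps)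
qed

lemma key:
  fixes a b c q1 q2 m12 m13 m23 xa xb xc xd :: real
  defines "C1 \<equiv> 1 / Rone" and "C2 \<equiv> 1 / Rtwo" and "C3 \<equiv> 1 / (kconst * Rone)" and "C4 \<equiv> 1 / (kconst * Rtwo)"
  shows "Phi C1 C2 C3 C4 a b c q1 q2 m12 m13 m23 xa xb xc xd = kconst * E1f C1 C2 C3 C4 a b c q1 q2
    + Phi C1 C2 C3 C4 0 0 0 0 0 (m12 - H12 s41 a b c / 1280) (m13 - H13 s41 a b c / 1280) (m23 - H13 s41 b a c / 1280)
      (xa - HA s41 a b c / 1280) (xb - HA s41 b a c / 1280) (xc - HC s41 a b c / 1280) (xd - HC s41 b a c / 1280)"
proof -
  let ?s = s41
  have cv: "C1 = (1/10) * (?s + 1)" "C2 = (1/10) * 10" "C3 = (1/10) * (19 - ?s)" "C4 = (1/10) * (5 * ?s - 15)"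
    "kconst = (3 + ?s) / 16"
    unfolding C1_def C2_def C3_def C4_def using cond_vals by simp_all
  have w: "\<And>m h::real. m - h / 1280 = (1/1280) * (1280 * m - h)" by (simp add: field_simps)
  have core': "16 * 1280^2 * Phi (?s+1) 10 (19-?s) (5 * ?s-15) a b c q1 q2 m12 m13 m23 xa xb xc xd =
    1280^2 * (3+?s) * E1f (?s+1) 10 (19-?s) (5 * ?s-15) a b c q1 q2 +
    16 * Phi (?s+1) 10 (19-?s) (5 * ?s-15) 0 0 0 0 0 (1280 * m12 - H12 ?s a b c) (1280 * m13 - H13 ?s a b c) (1280 * m23 - H13 ?s b a c)
    (1280 * xa - HA ?s a b c) (1280 * xb - HA ?s b a c) (1280 * xc - HC ?s a b c) (1280 * xd - HC ?s b a c)"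
    using core[of ?s] s41_sq by simp
  show ?thesis
    unfolding cv(1-4) w Phi_scale_c E1f_scale_c Phi_scale_v unfolding cv(5)
    using core' by (simp add: field_simps)
qed



definition pt :: "complex \<Rightarrow> complex \<Rightarrow> complex \<Rightarrow> real \<Rightarrow> real \<Rightarrow> complex" where
  "pt P1 P2 P3 x y = P1 + complex_of_real x * (P2 - P1) + complex_of_real y * (P3 - P1)"

lemma collin:
  assumes eq: "equilateral P1 P2 P3"
    and h: "complex_of_real y * (P2 - P1) + complex_of_real z * (P3 - P1) = 0"
  shows "y = 0 \<and> z = 0"
proof -
  define d2 where "d2 = P2 - P1"
  define d3 where "d3 = P3 - P1"
  have ne: "P1 \<noteq> P2" and e1: "dist P1 P2 = dist P2 P3" and e2: "dist P2 P3 = dist P3 P1"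
    using eq unfolding equilateral_def by auto
  have d2nz: "d2 \<noteq> 0" using ne unfolding d2_def by auto
  have n2: "norm d2 = dist P1 P2" unfolding d2_def by (simp add: dist_norm norm_minus_commute)
  have n3: "norm d3 = norm d2" unfolding d3_def using e1 e2 n2 by (simp add: dist_norm)
  have n32: "norm (d3 - d2) = norm d2" unfolding d3_def d2_def using e1 n2
    by (simp add: dist_norm norm_minus_commute)
  have h': "complex_of_real y * d2 + complex_of_real z * d3 = 0" using h unfolding d2_def d3_def .
  have pos: "norm d2 > 0" using d2nz by simp
  show ?thesis
  proof (cases "z = 0")
    case True
    then have "complex_of_real y * d2 = 0" using h' by simp
    then show ?thesis using d2nz True by simp
  next
    case False
    define t where "t = - y / z"
    have d3e: "d3 = complex_of_real t * d2"
    proof -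
      have "complex_of_real z * d3 = - (complex_of_real y * d2)" using h' by (simp add: eq_neg_iff_add_eq_0 add.commute)
      then have "d3 = - (complex_of_real y * d2) / complex_of_real z" using False
        by (simp add: field_simps)
      then show ?thesis unfolding t_def by (simp add: field_simps)
    qed
    have "norm d3 = \<bar>t\<bar> * norm d2" unfolding d3e by (simp add: norm_mult)
    then have t1: "\<bar>t\<bar> = 1" using n3 pos by simp
    have "d3 - d2 = complex_of_real (t - 1) * d2" unfolding d3e by (simp add: algebra_simps)
    then have "norm (d3 - d2) = \<bar>t - 1\<bar> * norm d2" by (simp only: norm_mult norm_of_real)
    then have t2: "\<bar>t - 1\<bar> = 1" using n32 pos by simp
    from t1 t2 show ?thesis by linarith
  qed
qed

lemma pt_eq:
  assumes "equilateral P1 P2 P3"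
  shows "pt P1 P2 P3 x y = pt P1 P2 P3 x' y' \<longleftrightarrow> x = x' \<and> y = y'"
proof
  assume "pt P1 P2 P3 x y = pt P1 P2 P3 x' y'"
  then have "complex_of_real (x - x') * (P2 - P1) + complex_of_real (y - y') * (P3 - P1) = 0"
    unfolding pt_def by (simp add: algebra_simps)
  then show "x = x' \<and> y = y'" using collin[OF assms] by fastforce
qed simp

lemma reps:
  "P1 = pt P1 P2 P3 0 0" "P2 = pt P1 P2 P3 1 0" "P3 = pt P1 P2 P3 0 1"
  "F3 P3 P1 = pt P1 P2 P3 0 (3/2)" "F3 P3 P2 = pt P1 P2 P3 (-1/2) (3/2)"
  "F1 P1 P2 = pt P1 P2 P3 (1/2) 0" "F1 P1 P3 = pt P1 P2 P3 0 (1/2)" "F2 P2 P3 = pt P1 P2 P3 (1/2) (1/2)"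
  "F1 P1 (F3 P3 P1) = pt P1 P2 P3 0 (3/4)" "F2 P2 (F3 P3 P2) = pt P1 P2 P3 (1/4) (3/4)"
  "F1 P1 (F3 P3 P2) = pt P1 P2 P3 (-1/4) (3/4)" "F2 P2 (F3 P3 P1) = pt P1 P2 P3 (1/2) (3/4)"
  unfolding pt_def F1_def F2_def F3_def by (simp_all add: field_simps)

lemma distinct12:
  assumes "equilateral P1 P2 P3"
  shows "distinct [P1, P2, P3, F3 P3 P1, F3 P3 P2, F1 P1 P2, F1 P1 P3, F2 P2 P3,
     F1 P1 (F3 P3 P1), F2 P2 (F3 P3 P2), F1 P1 (F3 P3 P2), F2 P2 (F3 P3 P1)]"
proof -
  let ?f = "\<lambda>(x, y). pt P1 P2 P3 x y"
  let ?xs = "[(0,0), (1,0), (0,1), (0,3/2), (-1/2,3/2), (1/2,0), (0,1/2), (1/2,1/2),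
    (0,3/4), (1/4,3/4), (-1/4,3/4), (1/2,3/4)] :: (real \<times> real) list"
  have l: "[P1, P2, P3, F3 P3 P1, F3 P3 P2, F1 P1 P2, F1 P1 P3, F2 P2 P3,
     F1 P1 (F3 P3 P1), F2 P2 (F3 P3 P2), F1 P1 (F3 P3 P2), F2 P2 (F3 P3 P1)] = map ?f ?xs"
    by (simp only: list.map prod.case reps[symmetric])
  have "inj_on ?f (set ?xs)"
    by (rule inj_onI) (auto simp: pt_eq[OF assms])
  moreover have "distinct ?xs" by simp
  ultimately show ?thesis unfolding l by (simp add: distinct_map)
qed



lemma Fsimps:
  "F1 P1 P1 = P1" "F2 P2 P2 = P2" "F3 P3 P3 = P3"
  unfolding F1_def F2_def F3_def by (simp_all add: field_simps)

abbreviation "CC1 \<equiv> 1 / Rone"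
abbreviation "CC2 \<equiv> 1 / Rtwo"
abbreviation "CC3 \<equiv> 1 / (kconst * Rone)"
abbreviation "CC4 \<equiv> 1 / (kconst * Rtwo)"

lemma energy_G1: "energy (G1 P1 P2 P3) u = E1f CC1 CC2 CC3 CC4 (u P1) (u P2) (u P3) (u (F3 P3 P1)) (u (F3 P3 P2))"
  by (simp add: energy_def G1_def edges1_def E1f_def add.assoc Let_def)

lemma energy_G2: "energy (G2 P1 P2 P3) u = Phi CC1 CC2 CC3 CC4 (u P1) (u P2) (u P3) (u (F3 P3 P1)) (u (F3 P3 P2))
   (u (F1 P1 P2)) (u (F1 P1 P3)) (u (F2 P2 P3)) (u (F1 P1 (F3 P3 P1))) (u (F2 P2 (F3 P3 P2)))
   (u (F1 P1 (F3 P3 P2))) (u (F2 P2 (F3 P3 P1)))"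
proof -
  have e: "F2 P2 P1 = F1 P1 P2" unfolding F1_def F2_def by (simp add: add.commute)
  have e2: "F3 P3 (F3 P3 P1) = F1 P1 (F3 P3 P1)" "F3 P3 (F3 P3 P2) = F2 P2 (F3 P3 P2)"
    unfolding F1_def F2_def F3_def by (simp_all add: field_simps)
  show ?thesis by (simp add: energy_def G2_def edges1_def Phi_def add.assoc Fsimps Let_def e e2)
qed

lemma cc_nonneg: "CC1 \<ge> 0" "CC2 \<ge> 0" "CC3 \<ge> 0" "CC4 \<ge> 0" "kconst > 0"
proof -
  show "CC1 \<ge> 0" "CC2 \<ge> 0" "CC3 \<ge> 0" "CC4 \<ge> 0"
    by (simp_all only: cond_vals(1-4)) (use s41_bounds in simp_all)
  show "kconst > 0" by (simp only: cond_vals(5)) (use s41_bounds in simp)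
qed

lemma E1f_nonneg: "c1 \<ge> 0 \<Longrightarrow> c2 \<ge> 0 \<Longrightarrow> c3 \<ge> 0 \<Longrightarrow> c4 \<ge> 0 \<Longrightarrow> E1f c1 c2 c3 c4 a b c q1 q2 \<ge> 0"
  unfolding E1f_def by (intro add_nonneg_nonneg mult_nonneg_nonneg; simp)

lemma energy_G1_nonneg: "energy (G1 P1 P2 P3) u \<ge> 0"
  unfolding energy_G1 using cc_nonneg by (intro E1f_nonneg) auto

lemma lower: "energy (G2 P1 P2 P3) u \<ge> kconst * energy (G1 P1 P2 P3) u"
proof -
  have n: "Phi CC1 CC2 CC3 CC4 0 0 0 0 0 m12 m13 m23 xa xb xc xd \<ge> 0" for m12 m13 m23 xa xb xc xd
    by (rule Phi_nonneg) (use cc_nonneg in auto)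
  show ?thesis unfolding energy_G1 energy_G2 by (subst key) (simp only: le_add_same_cancel1 n)
qed

definition ext :: "complex \<Rightarrow> complex \<Rightarrow> complex \<Rightarrow> (complex \<Rightarrow> real) \<Rightarrow> complex \<Rightarrow> real" where
  "ext P1 P2 P3 v x = (let a = v P1; b = v P2; c = v P3 in
     if x = F1 P1 P2 then H12 s41 a b c / 1280
     else if x = F1 P1 P3 then H13 s41 a b c / 1280
     else if x = F2 P2 P3 then H13 s41 b a c / 1280
     else if x = F1 P1 (F3 P3 P1) then HA s41 a b c / 1280
     else if x = F2 P2 (F3 P3 P2) then HA s41 b a c / 1280
     else if x = F1 P1 (F3 P3 P2) then HC s41 a b c / 1280
     else if x = F2 P2 (F3 P3 P1) then HC s41 b a c / 1280
     else v x)"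

lemma ext_V0:
  assumes "equilateral P1 P2 P3" "x \<in> V0 P1 P2 P3"
  shows "ext P1 P2 P3 v x = v x"
  using distinct12[OF assms(1)] assms(2) unfolding V0_def ext_def Let_def by auto




lemma ext_vals:
  assumes eq: "equilateral P1 P2 P3"
  shows "ext P1 P2 P3 v P1 = v P1" "ext P1 P2 P3 v P2 = v P2" "ext P1 P2 P3 v P3 = v P3"
    "ext P1 P2 P3 v (F3 P3 P1) = v (F3 P3 P1)" "ext P1 P2 P3 v (F3 P3 P2) = v (F3 P3 P2)"
    "ext P1 P2 P3 v (F1 P1 P2) = H12 s41 (v P1) (v P2) (v P3) / 1280"
    "ext P1 P2 P3 v (F1 P1 P3) = H13 s41 (v P1) (v P2) (v P3) / 1280"
    "ext P1 P2 P3 v (F2 P2 P3) = H13 s41 (v P2) (v P1) (v P3) / 1280"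
    "ext P1 P2 P3 v (F1 P1 (F3 P3 P1)) = HA s41 (v P1) (v P2) (v P3) / 1280"
    "ext P1 P2 P3 v (F2 P2 (F3 P3 P2)) = HA s41 (v P2) (v P1) (v P3) / 1280"
    "ext P1 P2 P3 v (F1 P1 (F3 P3 P2)) = HC s41 (v P1) (v P2) (v P3) / 1280"
    "ext P1 P2 P3 v (F2 P2 (F3 P3 P1)) = HC s41 (v P2) (v P1) (v P3) / 1280"
proof -
  have d: "distinct [P1, P2, P3, F3 P3 P1, F3 P3 P2, F1 P1 P2, F1 P1 P3, F2 P2 P3,
     F1 P1 (F3 P3 P1), F2 P2 (F3 P3 P2), F1 P1 (F3 P3 P2), F2 P2 (F3 P3 P1)]"
    by (rule distinct12[OF eq])
  show "ext P1 P2 P3 v P1 = v P1" "ext P1 P2 P3 v P2 = v P2" "ext P1 P2 P3 v P3 = v P3"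
    "ext P1 P2 P3 v (F3 P3 P1) = v (F3 P3 P1)" "ext P1 P2 P3 v (F3 P3 P2) = v (F3 P3 P2)"
    by (rule ext_V0[OF eq], simp add: V0_def)+
  from d have n: "F1 P1 P3 \<noteq> F1 P1 P2" "F2 P2 P3 \<noteq> F1 P1 P2" "F2 P2 P3 \<noteq> F1 P1 P3"
    "F1 P1 (F3 P3 P1) \<noteq> F1 P1 P2" "F1 P1 (F3 P3 P1) \<noteq> F1 P1 P3" "F1 P1 (F3 P3 P1) \<noteq> F2 P2 P3"
    "F2 P2 (F3 P3 P2) \<noteq> F1 P1 P2" "F2 P2 (F3 P3 P2) \<noteq> F1 P1 P3" "F2 P2 (F3 P3 P2) \<noteq> F2 P2 P3"
    "F2 P2 (F3 P3 P2) \<noteq> F1 P1 (F3 P3 P1)"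
    "F1 P1 (F3 P3 P2) \<noteq> F1 P1 P2" "F1 P1 (F3 P3 P2) \<noteq> F1 P1 P3" "F1 P1 (F3 P3 P2) \<noteq> F2 P2 P3"
    "F1 P1 (F3 P3 P2) \<noteq> F1 P1 (F3 P3 P1)" "F1 P1 (F3 P3 P2) \<noteq> F2 P2 (F3 P3 P2)"
    "F2 P2 (F3 P3 P1) \<noteq> F1 P1 P2" "F2 P2 (F3 P3 P1) \<noteq> F1 P1 P3" "F2 P2 (F3 P3 P1) \<noteq> F2 P2 P3"
    "F2 P2 (F3 P3 P1) \<noteq> F1 P1 (F3 P3 P1)" "F2 P2 (F3 P3 P1) \<noteq> F2 P2 (F3 P3 P2)"
    "F2 P2 (F3 P3 P1) \<noteq> F1 P1 (F3 P3 P2)"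
    by (simp_all add: eq_commute)
  have h: "ext P1 P2 P3 v P1 = v P1" "ext P1 P2 P3 v P2 = v P2" "ext P1 P2 P3 v P3 = v P3"
    by (rule ext_V0[OF eq], simp add: V0_def)+
  have e: "ext P1 P2 P3 v x = (let a = v P1; b = v P2; c = v P3 in
     if x = F1 P1 P2 then H12 s41 a b c / 1280
     else if x = F1 P1 P3 then H13 s41 a b c / 1280
     else if x = F2 P2 P3 then H13 s41 b a c / 1280
     else if x = F1 P1 (F3 P3 P1) then HA s41 a b c / 1280
     else if x = F2 P2 (F3 P3 P2) then HA s41 b a c / 1280
     else if x = F1 P1 (F3 P3 P2) then HC s41 a b c / 1280
     else if x = F2 P2 (F3 P3 P1) then HC s41 b a c / 1280
     else v x)" for x unfolding ext_def ..
  show "ext P1 P2 P3 v (F1 P1 P2) = H12 s41 (v P1) (v P2) (v P3) / 1280"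
    "ext P1 P2 P3 v (F1 P1 P3) = H13 s41 (v P1) (v P2) (v P3) / 1280"
    "ext P1 P2 P3 v (F2 P2 P3) = H13 s41 (v P2) (v P1) (v P3) / 1280"
    "ext P1 P2 P3 v (F1 P1 (F3 P3 P1)) = HA s41 (v P1) (v P2) (v P3) / 1280"
    "ext P1 P2 P3 v (F2 P2 (F3 P3 P2)) = HA s41 (v P2) (v P1) (v P3) / 1280"
    "ext P1 P2 P3 v (F1 P1 (F3 P3 P2)) = HC s41 (v P1) (v P2) (v P3) / 1280"
    "ext P1 P2 P3 v (F2 P2 (F3 P3 P1)) = HC s41 (v P2) (v P1) (v P3) / 1280"
    by (simp_all only: e Let_def n if_True if_False simp_thms)
qed

lemma ext_energy:
  assumes "equilateral P1 P2 P3"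
  shows "energy (G2 P1 P2 P3) (ext P1 P2 P3 v) = kconst * energy (G1 P1 P2 P3) v"
proof -
  have z: "Phi c1 c2 c3 c4 0 0 0 0 0 0 0 0 0 0 0 0 = 0" for c1 c2 c3 c4 unfolding Phi_def by simp
  show ?thesis
    unfolding energy_G1 energy_G2 ext_vals[OF assms]
    by (subst key) (simp only: diff_self z add_0_right)
qed


lemma V0_sub: "V0 P1 P2 P3 \<subseteq> fst (G2 P1 P2 P3)"
  by (auto simp: V0_def G2_def Fsimps)

lemma int_mem: "F1 P1 P2 \<in> fst (G2 P1 P2 P3)" "F1 P1 P3 \<in> fst (G2 P1 P2 P3)" "F2 P2 P3 \<in> fst (G2 P1 P2 P3)"
  "F1 P1 (F3 P3 P1) \<in> fst (G2 P1 P2 P3)" "F2 P2 (F3 P3 P2) \<in> fst (G2 P1 P2 P3)"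
  "F1 P1 (F3 P3 P2) \<in> fst (G2 P1 P2 P3)" "F2 P2 (F3 P3 P1) \<in> fst (G2 P1 P2 P3)"
  by (auto simp: V0_def G2_def Fsimps)




theorem mainTheorem1:
  fixes P1 P2 P3 p q :: complex
  assumes "equilateral P1 P2 P3"
    and "p \<in> V0 P1 P2 P3" and "q \<in> V0 P1 P2 P3"
  shows "reff (G1 P1 P2 P3) p q = kconst * reff (G2 P1 P2 P3) p q"
proof (cases "p = q")
  case True
  then show ?thesis by (simp add: reff_def)
next
  case False
  note eq = assms(1)
  define S1 where "S1 = {energy (G1 P1 P2 P3) u | u. (\<forall>x. x \<notin> fst (G1 P1 P2 P3) \<longrightarrow> u x = 0) \<and> u p = 1 \<and> u q = 0}"
  define S2 where "S2 = {energy (G2 P1 P2 P3) u | u. (\<forall>x. x \<notin> fst (G2 P1 P2 P3) \<longrightarrow> u x = 0) \<and> u p = 1 \<and> u q = 0}"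
  have r1: "reff (G1 P1 P2 P3) p q = 1 / Inf S1" unfolding reff_def S1_def using False by simp
  have r2: "reff (G2 P1 P2 P3) p q = 1 / Inf S2" unfolding reff_def S2_def using False by simp
  have fst1: "fst (G1 P1 P2 P3) = V0 P1 P2 P3" by (simp add: G1_def)
  have kpos: "kconst > 0" by (rule cc_nonneg(5))
  have V0pts: "P1 \<in> V0 P1 P2 P3" "P2 \<in> V0 P1 P2 P3" "P3 \<in> V0 P1 P2 P3"
    "F3 P3 P1 \<in> V0 P1 P2 P3" "F3 P3 P2 \<in> V0 P1 P2 P3" by (simp_all add: V0_def)
  have S1ne: "S1 \<noteq> {}"
  proof -
    let ?u = "\<lambda>x. if x = p then 1 else (0::real)"
    have "energy (G1 P1 P2 P3) ?u \<in> S1" unfolding S1_def fst1 using assms(2) False by auto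
    then show ?thesis by auto
  qed
  have S1bdd: "bdd_below S1" unfolding S1_def bdd_below_def using energy_G1_nonneg by blast
  have S2bdd: "bdd_below S2" unfolding bdd_below_def
  proof (intro exI ballI)
    fix e assume "e \<in> S2"
    then obtain u where u: "e = energy (G2 P1 P2 P3) u" unfolding S2_def by blast
    have "0 \<le> kconst * energy (G1 P1 P2 P3) u"
      using kpos energy_G1_nonneg[of P1 P2 P3 u] by simp
    also have "... \<le> e" unfolding u by (rule lower)
    finally show "0 \<le> e" .
  qed
  have A: "\<exists>e1\<in>S1. kconst * e1 \<le> e2" if e2S: "e2 \<in> S2" for e2
  proof -
    obtain u where u: "e2 = energy (G2 P1 P2 P3) u" "\<forall>x. x \<notin> fst (G2 P1 P2 P3) \<longrightarrow> u x = 0"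
      "u p = 1" "u q = 0" using e2S unfolding S2_def by blast
    define v where "v x = (if x \<in> V0 P1 P2 P3 then u x else 0)" for x
    have "energy (G1 P1 P2 P3) v = energy (G1 P1 P2 P3) u"
      unfolding energy_G1 v_def using V0pts by simp
    moreover have "energy (G1 P1 P2 P3) v \<in> S1"
      unfolding S1_def fst1 using u(3,4) assms(2,3) by (auto simp: v_def)
    ultimately show ?thesis using lower[of P1 P2 P3 u] unfolding u(1) by auto
  qed
  have B: "kconst * e1 \<in> S2" if e1S: "e1 \<in> S1" for e1
  proof -
    obtain v where v: "e1 = energy (G1 P1 P2 P3) v" "\<forall>x. x \<notin> V0 P1 P2 P3 \<longrightarrow> v x = 0"
      "v p = 1" "v q = 0" using e1S unfolding S1_def fst1 by blast
    let ?g = "ext P1 P2 P3 v"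
    have "?g p = 1" "?g q = 0" using ext_V0[OF eq] assms(2,3) v(3,4) by auto
    moreover have "\<forall>x. x \<notin> fst (G2 P1 P2 P3) \<longrightarrow> ?g x = 0"
    proof (intro allI impI)
      fix x assume x: "x \<notin> fst (G2 P1 P2 P3)"
      then have "x \<notin> V0 P1 P2 P3" using V0_sub by blast
      moreover have "x \<noteq> F1 P1 P2" "x \<noteq> F1 P1 P3" "x \<noteq> F2 P2 P3" "x \<noteq> F1 P1 (F3 P3 P1)"
        "x \<noteq> F2 P2 (F3 P3 P2)" "x \<noteq> F1 P1 (F3 P3 P2)" "x \<noteq> F2 P2 (F3 P3 P1)"
        using x int_mem by metis+
      ultimately show "?g x = 0" using v(2) unfolding ext_def Let_def by simp
    qed
    ultimately have "energy (G2 P1 P2 P3) ?g \<in> S2" unfolding S2_def by blast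
    then show ?thesis using ext_energy[OF eq] v(1) by simp
  qed
  have S2ne: "S2 \<noteq> {}" using S1ne B by blast
  have ge: "kconst * Inf S1 \<le> Inf S2"
  proof (rule cInf_greatest[OF S2ne])
    fix e2 assume "e2 \<in> S2"
    then obtain e1 where "e1 \<in> S1" "kconst * e1 \<le> e2" using A by blast
    moreover have "Inf S1 \<le> e1" using cInf_lower[OF \<open>e1 \<in> S1\<close> S1bdd] .
    ultimately show "kconst * Inf S1 \<le> e2" using kpos
      by (meson mult_left_mono order_less_imp_le order_trans)
  qed
  have le: "Inf S2 / kconst \<le> Inf S1"
  proof (rule cInf_greatest[OF S1ne])
    fix e1 assume "e1 \<in> S1"
    then have "Inf S2 \<le> kconst * e1" using B cInf_lower S2bdd by blast
    then show "Inf S2 / kconst \<le> e1" using kpos by (simp add: divide_le_eq mult.commute)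
  qed
  have "Inf S2 = kconst * Inf S1" using ge le kpos by (simp add: divide_le_eq mult.commute)
  then show ?thesis unfolding r1 r2 using kpos by simp
qed


end
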